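(* Let $\{M_p\mid p\in P\}$ be a Morse decomposition of a multivector field on a finite simplicial complex $K$, let $f:K\to\mathbb R$ be Lyapunov for the Morse decomposition, and let $P_f$ and $P'_f$ be two $f$-compatible orders of $P$, with corresponding persistence modules $H(\mathbf F,P_f)$ and $H(\mathbf F',P'_f)$. Then $\mathrm{pers}(H(\mathbf F,P_f))=\mathrm{pers}(H(\mathbf F',P'_f))$.
   Context: $K$ is a finite simplicial complex; a multivector field $\mathcal V$ on $K$ is a partition of $K$ into convex sets $V$ (if $\sigma,\tau\in V$ and $\sigma\le\mu\le\tau$ in the face order then $\mu\in V$); $F_{\mathcal V}(\sigma)=[\sigma]_{\mathcal V}\cup\{\tau:\tau\le\sigma\}$ where $[\sigma]_{\mathcal V}$ is the part containing $\sigma$; a path is a sequence $\sigma_1,\dots,\sigma_r$ with $\sigma_k\in F_{\mathcal V}(\sigma_{k-1})$. A Morse decomposition indexed by a finite poset $(P,\le_P)$ is a partition $K=\bigsqcup_{p\in P}M_p$ such that every path from $M_p$ to $M_q$ has $q\le_P p$. Let $m=|P|$. $f:K\to\mathbb R$ is Lyapunov if $f$ is constant on each $M_p$, with value $f(p)$, and $p\le_P q\Rightarrow f(p)\le f(q)$. An $f$-compatible order $P_f$ is an enumeration $p_1,\dots,p_m$ of $P$ that is a linear extension of $\le_P$ with $f(p_1)\le\dots\le f(p_m)$. For such an order, $K_i=\bigsqcup_{j\le i}M_{p_j}$ is a subcomplex of $K$ and $H(\mathbf F,P_f)$ is the persistence module $H_*(C(K_1))\to\dots\to H_*(C(K_m))$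 of simplicial homology over $\mathbb Z_2$ with inclusion-induced maps; $\mathbf F'$ is the same construction for $P'_f$. For such a module indexed by $p_1,\dots,p_m$, $\mathrm{pers}$ is the persistence diagram: decompose each homological degree into interval modules $[a,b]$, $1\le a\le b\le m$, and record for each the point $(f(p_a),f(p_{b+1}))$ with $f(p_{m+1}):=+\infty$, discarding points with $f(p_a)=f(p_{b+1})$; the result is a multiset of points per degree. *)

theory Defs
  imports "HOL-Analysis.Analysis" "HOL-Library.Z2" "HOL-Library.Function_Algebras" "HOL-Library.Multiset"
begin

definition finite_simp_complex :: "'v set set \<Rightarrow> bool" where
  "finite_simp_complex K \<longleftrightarrow> finite K \<and>
     (\<forall>\<sigma>\<in>K. finite \<sigma> \<and> \<sigma> \<noteq> {} \<and> (\<forall>\<tau>. \<tau> \<noteq> {} \<and> \<tau> \<subseteq> \<sigma> \<longrightarrow> \<tau> \<in> K))"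

definition convex_in :: "'v set set \<Rightarrow> bool" where
  "convex_in A \<longleftrightarrow> (\<forall>\<sigma>\<in>A. \<forall>\<tau>\<in>A. \<forall>\<mu>. \<sigma> \<subseteq> \<mu> \<and> \<mu> \<subseteq> \<tau> \<longrightarrow> \<mu> \<in> A)"

definition multivector_field :: "'v set set \<Rightarrow> 'v set set set \<Rightarrow> bool" where
  "multivector_field K V \<longleftrightarrow>
     (\<forall>A\<in>V. A \<noteq> {} \<and> A \<subseteq> K \<and> convex_in A) \<and> \<Union>V = K \<and>
     (\<forall>A\<in>V. \<forall>B\<in>V. A \<noteq> B \<longrightarrow> A \<inter> B = {})"

definition mv_class :: "'v set set set \<Rightarrow> 'v set \<Rightarrow> 'v set set" where
  "mv_class V \<sigma> = (THE A. A \<in> V \<and> \<sigma> \<in> A)"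

definition mv_F :: "'v set set \<Rightarrow> 'v set set set \<Rightarrow> 'v set \<Rightarrow> 'v set set" where
  "mv_F K V \<sigma> = mv_class V \<sigma> \<union> {\<tau> \<in> K. \<tau> \<subseteq> \<sigma>}"

definition mv_path :: "'v set set \<Rightarrow> 'v set set set \<Rightarrow> 'v set list \<Rightarrow> bool" where
  "mv_path K V xs \<longleftrightarrow> xs \<noteq> [] \<and> set xs \<subseteq> K \<and>
     (\<forall>k. Suc k < length xs \<longrightarrow> xs ! Suc k \<in> mv_F K V (xs ! k))"

definition morse_decomposition ::
  "'v set set \<Rightarrow> 'v set set set \<Rightarrow> ('p::order) set \<Rightarrow> ('p \<Rightarrow> 'v set set) \<Rightarrow> bool" where
  "morse_decomposition K V P M \<longleftrightarrow> finite P \<and>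
     (\<forall>p\<in>P. M p \<noteq> {}) \<and> (\<Union>p\<in>P. M p) = K \<and>
     (\<forall>p\<in>P. \<forall>q\<in>P. p \<noteq> q \<longrightarrow> M p \<inter> M q = {}) \<and>
     (\<forall>p\<in>P. \<forall>q\<in>P. \<forall>xs. mv_path K V xs \<and> hd xs \<in> M p \<and> last xs \<in> M q \<longrightarrow> q \<le> p)"

definition lyap_val :: "('p \<Rightarrow> 'v set set) \<Rightarrow> ('v set \<Rightarrow> real) \<Rightarrow> 'p \<Rightarrow> real" where
  "lyap_val M f p = f (SOME \<sigma>. \<sigma> \<in> M p)"

definition lyapunov :: "('p::order) set \<Rightarrow> ('p \<Rightarrow> 'v set set) \<Rightarrow> ('v set \<Rightarrow> real) \<Rightarrow> bool" where
  "lyapunov P M f \<longleftrightarrow>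
     (\<forall>p\<in>P. \<forall>\<sigma>\<in>M p. f \<sigma> = lyap_val M f p) \<and>
     (\<forall>p\<in>P. \<forall>q\<in>P. p \<le> q \<longrightarrow> lyap_val M f p \<le> lyap_val M f q)"

text \<open>An f-compatible order: an enumeration \<open>ps = [p_1, ..., p_m]\<close> of P (0-based list)
  that is a linear extension of the partial order and along which f is nondecreasing.\<close>
definition f_compatible :: "('p::order) set \<Rightarrow> ('p \<Rightarrow> 'v set set) \<Rightarrow> ('v set \<Rightarrow> real) \<Rightarrow> 'p list \<Rightarrow> bool" where
  "f_compatible P M f ps \<longleftrightarrow> distinct ps \<and> set ps = P \<and>
     (\<forall>i<length ps. \<forall>j<length ps. ps ! i \<le> ps ! j \<longrightarrow> i \<le> j) \<and>
     sorted (map (lyap_val M f) ps)"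

definition filt :: "('p \<Rightarrow> 'v set set) \<Rightarrow> 'p list \<Rightarrow> nat \<Rightarrow> 'v set set" where
  "filt M ps i = (\<Union>p\<in>set (take i ps). M p)"

text \<open>Chains with Z_2 coefficients: functions from simplices to \<open>bit\<close>. A q-chain of L is
  supported on the q-simplices (card = q+1) of L.\<close>

definition chains :: "'v set set \<Rightarrow> nat \<Rightarrow> ('v set \<Rightarrow> bit) set" where
  "chains L q = {c. \<forall>\<sigma>. c \<sigma> \<noteq> 0 \<longrightarrow> \<sigma> \<in> L \<and> card \<sigma> = Suc q}"

text \<open>Boundary operator over Z_2: the coefficient of \<tau> in \<open>\<partial>c\<close> is the sum of the
  coefficients of the cofaces of \<tau> of one dimension higher (the empty set is not a simplex,
  so vertices have zero boundary).\<close>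
definition boundary :: "('v set \<Rightarrow> bit) \<Rightarrow> ('v set \<Rightarrow> bit)" where
  "boundary c = (\<lambda>\<tau>. if \<tau> = {} then 0 else
      (\<Sum>\<sigma>\<in>{\<sigma>. c \<sigma> \<noteq> 0 \<and> \<tau> \<subseteq> \<sigma> \<and> card \<sigma> = Suc (card \<tau>)}. c \<sigma>))"

definition cycles :: "'v set set \<Rightarrow> nat \<Rightarrow> ('v set \<Rightarrow> bit) set" where
  "cycles L q = {c \<in> chains L q. boundary c = 0}"

definition bdries :: "'v set set \<Rightarrow> nat \<Rightarrow> ('v set \<Rightarrow> bit) set" where
  "bdries L q = boundary ` chains L (Suc q)"

definition z2dim :: "('v set \<Rightarrow> bit) set \<Rightarrow> nat" where
  "z2dim S = vector_space.dim (\<lambda>(a::bit) (c::'v set \<Rightarrow> bit) x. a * c x) S"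

text \<open>Rank of the inclusion-induced map \<open>H_q(L1) \<rightarrow> H_q(L2)\<close> for \<open>L1 \<subseteq> L2\<close>:
  its image is \<open>(Z_q(L1) + B_q(L2)) / B_q(L2)\<close>.\<close>
definition hom_rank :: "'v set set \<Rightarrow> 'v set set \<Rightarrow> nat \<Rightarrow> nat" where
  "hom_rank L1 L2 q = z2dim (cycles L1 q \<union> bdries L2 q) - z2dim (bdries L2 q)"

text \<open>Rank function of the persistence module \<open>H_q(K_1) \<rightarrow> ... \<rightarrow> H_q(K_m)\<close>
  (indices 1..m; zero outside this range).\<close>
definition pm_rank :: "('p \<Rightarrow> 'v set set) \<Rightarrow> 'p list \<Rightarrow> nat \<Rightarrow> nat \<Rightarrow> nat \<Rightarrow> int" where
  "pm_rank M ps q a b =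
     (if 1 \<le> a \<and> a \<le> b \<and> b \<le> length ps then int (hom_rank (filt M ps a) (filt M ps b) q) else 0)"

text \<open>Multiplicity of the interval module \<open>[a,b]\<close> in the interval decomposition
  (determined by the rank function by inclusion-exclusion).\<close>
definition interval_mult :: "('p \<Rightarrow> 'v set set) \<Rightarrow> 'p list \<Rightarrow> nat \<Rightarrow> nat \<Rightarrow> nat \<Rightarrow> nat" where
  "interval_mult M ps q a b = nat (pm_rank M ps q a b - pm_rank M ps q (a - 1) b
      - pm_rank M ps q a (Suc b) + pm_rank M ps q (a - 1) (Suc b))"

text \<open>\<open>f(p_i)\<close> for \<open>1 \<le> i \<le> m\<close>, and \<open>f(p_{m+1}) = +\<infinity>\<close>.\<close>
definition fval_at :: "('p \<Rightarrow> 'v set set) \<Rightarrow> ('v set \<Rightarrow> real) \<Rightarrow> 'p list \<Rightarrow> nat \<Rightarrow> ereal" where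
  "fval_at M f ps i = (if i \<le> length ps then ereal (lyap_val M f (ps ! (i - 1))) else \<infinity>)"

definition pers :: "('p \<Rightarrow> 'v set set) \<Rightarrow> ('v set \<Rightarrow> real) \<Rightarrow> 'p list \<Rightarrow> nat \<Rightarrow> (ereal \<times> ereal) multiset" where
  "pers M f ps q = (\<Sum>(a, b)\<in>{(a, b). 1 \<le> a \<and> a \<le> b \<and> b \<le> length ps \<and>
        fval_at M f ps a \<noteq> fval_at M f ps (Suc b)}.
      replicate_mset (interval_mult M ps q a b) (fval_at M f ps a, fval_at M f ps (Suc b)))"

end

theory Submission
  imports Defs
begin

interpretation Z: vector_space "\<lambda>(a::bit) (c::'v set \<Rightarrow> bit) x. a * c x"
  by unfold_locales (auto simp: fun_eq_iff plus_fun_def algebra_simps)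

lemma z2dim_eq: "z2dim S = Z.dim S"
  unfolding z2dim_def ..

context vector_space
begin

lemma card_indep_le_dim:
  assumes "independent C" "C \<subseteq> span X" "X \<subseteq> span W" "finite W"
  shows "card C \<le> dim X"
proof -
  obtain B where B: "B \<subseteq> X" "independent B" "X \<subseteq> span B" "card B = dim X"
    by (rule basis_exists)
  have "finite B" using independent_span_bound[OF assms(4) B(2)] B(1) assms(3) by blast
  have "C \<subseteq> span B" using assms(2) B(3) by (metis span_mono span_span subset_trans)
  from independent_span_bound[OF \<open>finite B\<close> assms(1) this] B(4) show ?thesis by simp
qed

lemma dim_mono_fin:
  assumes "S \<subseteq> T" "T \<subseteq> span W" "finite W"
  shows "dim S \<le> dim T"
proof -
  obtain B where B: "B \<subseteq> S" "independent B" "S \<subseteq> span B" "card B = dim S"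
    by (rule basis_exists)
  have "B \<subseteq> span T" using B(1) assms(1) span_superset by blast
  from card_indep_le_dim[OF B(2) this assms(2,3)] B(4) show ?thesis by simp
qed

lemma dim_submod:
  assumes "A \<subseteq> span W" "B \<subseteq> span W" "finite W"
  shows "dim (A \<union> B) + dim (A \<inter> B) \<le> dim A + dim B"
proof -
  obtain I where I: "I \<subseteq> A \<inter> B" "independent I" "A \<inter> B \<subseteq> span I" "card I = dim (A \<inter> B)"
    by (rule basis_exists)
  obtain J where J: "I \<subseteq> J" "J \<subseteq> A \<union> B" "independent J" "A \<union> B \<subseteq> span J"
    using maximal_independent_subset_extend[OF _ I(2), of "A \<union> B"] I(1) by blast
  have cJ: "card J = dim (A \<union> B)" using basis_card_eq_dim[OF J(2) J(4) J(3)] .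
  have "A \<union> B \<subseteq> span W" using assms by blast
  hence fJ: "finite J" using independent_span_bound[OF assms(3) J(3)] J(2) by blast
  have c1: "card (J \<inter> A) \<le> dim A"
    by (rule card_indep_le_dim[OF _ _ assms(1,3)]) (use independent_mono[OF J(3)] span_superset[of A] span_superset[of B] span_superset[of "A \<inter> B"] in blast)+
  have c2: "card (J \<inter> B) \<le> dim B"
    by (rule card_indep_le_dim[OF _ _ assms(2,3)]) (use independent_mono[OF J(3)] span_superset[of A] span_superset[of B] span_superset[of "A \<inter> B"] in blast)+
  have "A \<inter> B \<subseteq> span W" using assms by blast
  have c3: "card (J \<inter> A \<inter> B) \<le> dim (A \<inter> B)"
    by (rule card_indep_le_dim[OF _ _ \<open>A \<inter> B \<subseteq> span W\<close> assms(3)]) (use independent_mono[OF J(3)] span_superset[of A] span_superset[of B] span_superset[of "A \<inter> B"] in blast)+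
  have c4: "card I \<le> card (J \<inter> A \<inter> B)"
    using I(1) J(1) fJ by (intro card_mono) auto
  have "card (J \<inter> A) + card (J \<inter> B) = card ((J \<inter> A) \<union> (J \<inter> B)) + card ((J \<inter> A) \<inter> (J \<inter> B))"
    using fJ by (intro card_Un_Int) auto
  moreover have "(J \<inter> A) \<union> (J \<inter> B) = J" using J(2) by blast
  moreover have "(J \<inter> A) \<inter> (J \<inter> B) = J \<inter> A \<inter> B" by blast
  ultimately have "card (J \<inter> A) + card (J \<inter> B) = card J + card (J \<inter> A \<inter> B)" by simp
  then show ?thesis using c1 c2 c3 c4 cJ I(4) by linarith
qed

lemma dim_ineq4:
  assumes "X' \<subseteq> X" "Y \<subseteq> Y'" "X \<subseteq> span W" "Y' \<subseteq> span W" "finite W"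
  shows "int (dim (X \<union> Y) - dim Y) - int (dim (X' \<union> Y) - dim Y)
       - int (dim (X \<union> Y') - dim Y') + int (dim (X' \<union> Y') - dim Y') \<ge> 0"
proof -
  have XY: "X \<union> Y' \<subseteq> span W" using assms by blast
  have s1: "X \<union> Y \<subseteq> span W" "X' \<union> Y \<subseteq> span W" "X \<union> Y' \<subseteq> span W" "X' \<union> Y' \<subseteq> span W"
    using assms by blast+
  have m1: "dim Y \<le> dim (X \<union> Y)" by (rule dim_mono_fin[OF _ s1(1) assms(5)]) blast
  have m2: "dim Y \<le> dim (X' \<union> Y)" by (rule dim_mono_fin[OF _ s1(2) assms(5)]) blast
  have m3: "dim Y' \<le> dim (X \<union> Y')" by (rule dim_mono_fin[OF _ s1(3) assms(5)]) blast
  have m4: "dim Y' \<le> dim (X' \<union> Y')" by (rule dim_mono_fin[OF _ s1(4) assms(5)]) blast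
  have sm: "dim ((X \<union> Y) \<union> (X' \<union> Y')) + dim ((X \<union> Y) \<inter> (X' \<union> Y')) \<le> dim (X \<union> Y) + dim (X' \<union> Y')"
    by (rule dim_submod[OF s1(1) s1(4) assms(5)])
  have e: "(X \<union> Y) \<union> (X' \<union> Y') = X \<union> Y'" using assms by blast
  have s5: "(X \<union> Y) \<inter> (X' \<union> Y') \<subseteq> span W" using s1 by blast
  have m5: "dim (X' \<union> Y) \<le> dim ((X \<union> Y) \<inter> (X' \<union> Y'))"
    by (rule dim_mono_fin[OF _ s5 assms(5)]) (use assms(1,2) in blast)
  show ?thesis using m1 m2 m3 m4 sm e m5 by simp
qed

end

definition WK :: "'v set set \<Rightarrow> ('v set \<Rightarrow> bit) set" where
  "WK K = {c. \<forall>\<sigma>. c \<sigma> \<noteq> 0 \<longrightarrow> \<sigma> \<in> K}"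

lemma finite_WK:
  assumes "finite K" shows "finite (WK K)"
proof -
  have "WK K \<subseteq> (\<lambda>S \<sigma>. if \<sigma> \<in> S then 1 else 0) ` Pow K"
  proof
    fix c assume c: "c \<in> WK K"
    have "c = (\<lambda>\<sigma>. if \<sigma> \<in> {\<sigma>. c \<sigma> \<noteq> 0} then 1 else 0)"
      by (auto simp: fun_eq_iff)
    moreover have "{\<sigma>. c \<sigma> \<noteq> 0} \<in> Pow K" using c by (auto simp: WK_def)
    ultimately show "c \<in> (\<lambda>S \<sigma>. if \<sigma> \<in> S then 1 else 0) ` Pow K" by blast
  qed
  then show ?thesis using assms by (rule finite_subset[OF _ finite_imageI[OF finite_Pow_iff[THEN iffD2]]])
qed

lemma chains_WK: "L \<subseteq> K \<Longrightarrow> chains L q \<subseteq> WK K"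
  by (auto simp: chains_def WK_def)

lemma cycles_WK:
  assumes "L \<subseteq> K" shows "cycles L q \<subseteq> WK K"
proof -
  have "cycles L q \<subseteq> chains L q" by (auto simp: cycles_def)
  then show ?thesis using chains_WK[OF assms, of q] by (rule subset_trans)
qed

lemma bdries_WK:
  assumes "finite_simp_complex K" "L \<subseteq> K"
  shows "bdries L q \<subseteq> WK K"
proof
  fix d assume "d \<in> bdries L q"
  then obtain c where c: "c \<in> chains L (Suc q)" "d = boundary c" unfolding bdries_def by blast
  have dc: "d \<tau> = boundary c \<tau>" for \<tau> using c(2) by (rule fun_cong)
  show "d \<in> WK K" unfolding WK_def
  proof (intro CollectI allI impI)
    fix \<tau> assume nz: "d \<tau> \<noteq> 0"
    have ne: "\<tau> \<noteq> {}"
    proof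
      assume "\<tau> = {}"
      then have "boundary c \<tau> = 0" by (simp add: boundary_def)
      with dc[of \<tau>] have "d \<tau> = 0" by (rule trans)
      with nz show False by contradiction
    qed
    have "{\<sigma>. c \<sigma> \<noteq> 0 \<and> \<tau> \<subseteq> \<sigma> \<and> card \<sigma> = Suc (card \<tau>)} \<noteq> {}"
    proof
      assume E: "{\<sigma>. c \<sigma> \<noteq> 0 \<and> \<tau> \<subseteq> \<sigma> \<and> card \<sigma> = Suc (card \<tau>)} = {}"
      have "boundary c \<tau> = 0" unfolding boundary_def E using ne by simp
      with dc[of \<tau>] have "d \<tau> = 0" by (rule trans)
      with nz show False by contradiction
    qed
    then obtain \<sigma> where s: "c \<sigma> \<noteq> 0" "\<tau> \<subseteq> \<sigma>" by blast
    have "\<sigma> \<in> L" using s(1) c(1) unfolding chains_def by blast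
    hence "\<sigma> \<in> K" using assms(2) by blast
    moreover have "\<forall>\<sigma>\<in>K. finite \<sigma> \<and> \<sigma> \<noteq> {} \<and> (\<forall>\<tau>. \<tau> \<noteq> {} \<and> \<tau> \<subseteq> \<sigma> \<longrightarrow> \<tau> \<in> K)"
      using assms(1) unfolding finite_simp_complex_def by (rule conjunct2)
    ultimately show "\<tau> \<in> K" using ne s(2) by blast
  qed
qed

lemma chains_mono: "L \<subseteq> L' \<Longrightarrow> chains L q \<subseteq> chains L' q"
  by (auto simp: chains_def)

lemma cycles_mono: "L \<subseteq> L' \<Longrightarrow> cycles L q \<subseteq> cycles L' q"
  unfolding cycles_def using chains_mono[of L L' q] by auto

lemma bdries_mono: "L \<subseteq> L' \<Longrightarrow> bdries L q \<subseteq> bdries L' q"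
  using chains_mono unfolding bdries_def by (meson image_mono)

lemma filt_mono: "i \<le> j \<Longrightarrow> filt M ps i \<subseteq> filt M ps j"
  unfolding filt_def by (rule UN_mono[OF set_take_subset_set_take]) simp_all

lemma filt_K: "\<forall>p\<in>set ps. M p \<subseteq> K \<Longrightarrow> filt M ps i \<subseteq> K"
  unfolding filt_def by (rule UN_least) (use set_take_subset[of i ps] in blast)

lemma G_nonneg:
  assumes fsc: "finite_simp_complex K" and sub: "\<forall>p\<in>set ps. M p \<subseteq> K"
    and ab: "1 \<le> a" "a \<le> b" "b \<le> length ps"
  shows "pm_rank M ps q a b - pm_rank M ps q (a - 1) b - pm_rank M ps q a (Suc b)
           + pm_rank M ps q (a - 1) (Suc b) \<ge> 0"
proof -
  define W where "W = WK K"
  define Hf where "Hf X Y = int (Z.dim (X \<union> Y) - Z.dim Y)" for X Y :: "('a set \<Rightarrow> bit) set"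
  define X where "X = cycles (filt M ps a) q"
  define X' where "X' = (if a = 1 then {} else cycles (filt M ps (a - 1)) q)"
  define Y where "Y = bdries (filt M ps b) q"
  define Y' where "Y' = (if b = length ps then W else bdries (filt M ps (Suc b)) q)"
  have "finite K" using fsc unfolding finite_simp_complex_def by (rule conjunct1)
  then have fW: "finite W" unfolding W_def by (rule finite_WK)
  have XW: "X \<subseteq> W" unfolding X_def W_def by (rule cycles_WK[OF filt_K[OF sub]])
  have X'W: "X' \<subseteq> W" unfolding X'_def W_def using cycles_WK[OF filt_K[OF sub]] by auto
  have YW: "Y' \<subseteq> W" unfolding Y'_def W_def using bdries_WK[OF fsc filt_K[OF sub]] by auto
  have XX: "X' \<subseteq> X" unfolding X'_def X_def using cycles_mono[OF filt_mono[of "a - 1" a]] by auto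
  have YY: "Y \<subseteq> Y'" unfolding Y'_def Y_def W_def
    using bdries_mono[OF filt_mono[of b "Suc b"]] bdries_WK[OF fsc filt_K[OF sub]] by auto
  have h1: "pm_rank M ps q a b = Hf X Y"
    using ab by (simp add: pm_rank_def hom_rank_def z2dim_eq Hf_def X_def Y_def)
  have h2: "pm_rank M ps q (a - 1) b = Hf X' Y"
    using ab by (auto simp add: pm_rank_def hom_rank_def z2dim_eq Hf_def X'_def Y_def)
  have h3: "pm_rank M ps q a (Suc b) = Hf X Y'"
  proof (cases "b = length ps")
    case True
    then have "X \<union> Y' = Y'" using XW by (auto simp: Y'_def)
    then show ?thesis using True by (simp add: pm_rank_def Hf_def)
  next
    case False
    then show ?thesis using ab by (simp add: pm_rank_def hom_rank_def z2dim_eq Hf_def X_def Y'_def)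
  qed
  have h4: "pm_rank M ps q (a - 1) (Suc b) = Hf X' Y'"
  proof (cases "b = length ps")
    case True
    then have "X' \<union> Y' = Y'" using X'W by (auto simp: Y'_def)
    then show ?thesis using True by (simp add: pm_rank_def Hf_def)
  next
    case False
    then show ?thesis using ab by (auto simp add: pm_rank_def hom_rank_def z2dim_eq Hf_def X'_def Y'_def)
  qed
  have "Hf X Y - Hf X' Y - Hf X Y' + Hf X' Y' \<ge> 0"
    unfolding Hf_def
    by (rule Z.dim_ineq4[OF XX YY _ _ fW]) (use XW YW Z.span_superset[of W] in blast)+
  then show ?thesis using h1 h2 h3 h4 by simp
qed


lemma sorted_filter_idx:
  fixes vs :: "real list"
  assumes "sorted vs" "\<And>v w. Q v \<Longrightarrow> w \<le> v \<Longrightarrow> Q w" "i < length vs"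
  shows "Q (vs ! i) \<longleftrightarrow> i < length (filter Q vs)"
  using assms
proof (induction vs arbitrary: i)
  case Nil
  then show ?case by simp
next
  case (Cons v vs)
  show ?case
  proof (cases "Q v")
    case True
    then show ?thesis using Cons by (cases i) auto
  next
    case False
    have nq: "\<not> Q w" if "w \<in> set vs" for w
      using Cons.prems(1) that False Cons.prems(2) by auto
    hence "filter Q vs = []" by (simp add: filter_empty_conv)
    moreover have "\<not> Q ((v # vs) ! i)"
      using False nq Cons.prems(3) by (cases i) auto
    ultimately show ?thesis using False by simp
  qed
qed

lemma set_take_filter:
  fixes val :: "'p \<Rightarrow> real"
  assumes "sorted (map val ps)" "\<And>v w. Q v \<Longrightarrow> w \<le> v \<Longrightarrow> Q w"
  shows "set (take (length (filter Q (map val ps))) ps) = {p \<in> set ps. Q (val p)}"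
proof (intro set_eqI iffI)
  fix x assume "x \<in> set (take (length (filter Q (map val ps))) ps)"
  then obtain i where i0: "i < length (take (length (filter Q (map val ps))) ps)"
      "take (length (filter Q (map val ps))) ps ! i = x"
    by (metis in_set_conv_nth)
  have "i < min (length (filter Q (map val ps))) (length ps)" using i0(1) by (simp only: length_take)
  then have i: "i < length (filter Q (map val ps))" "i < length ps" "ps ! i = x"
    using i0(2) by (simp_all only: min_less_iff_conj nth_take)
  have "Q (map val ps ! i)" using sorted_filter_idx[of "map val ps" Q i, OF assms] i by simp
  then show "x \<in> {p \<in> set ps. Q (val p)}" using i by auto
next
  fix x assume "x \<in> {p \<in> set ps. Q (val p)}"
  then obtain i where i: "i < length ps" "ps ! i = x" "Q (val x)" by (auto simp: in_set_conv_nth)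
  have "i < length (filter Q (map val ps))" using sorted_filter_idx[of "map val ps" Q i, OF assms] i by simp
  then show "x \<in> set (take (length (filter Q (map val ps))) ps)"
    using i by (auto simp: in_set_conv_nth intro!: exI[of _ i])
qed

lemma tele_b:
  fixes h :: "nat \<Rightarrow> int"
  assumes "lo \<le> hi"
  shows "(\<Sum>b\<in>{lo..<hi}. h b - h (Suc b)) = h lo - h hi"
  using assms by (induction hi rule: dec_induct) auto

lemma tele_a:
  fixes g :: "nat \<Rightarrow> int"
  assumes "lo \<le> hi"
  shows "(\<Sum>a\<in>{lo<..hi}. g a - g (a - 1)) = g hi - g lo"
  using assms
proof (induction hi rule: dec_induct)
  case base
  then show ?case by simp
next
  case (step n)
  have "{lo<..Suc n} = insert (Suc n) {lo<..n}" using step.hyps(1) by auto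
  then show ?case using step by simp
qed

lemma tele2:
  fixes R :: "nat \<Rightarrow> nat \<Rightarrow> int"
  assumes "lo \<le> hi" "lo2 \<le> hi2"
  shows "(\<Sum>a\<in>{lo<..hi}. \<Sum>b\<in>{lo2..<hi2}. R a b - R (a - 1) b - R a (Suc b) + R (a - 1) (Suc b))
     = R hi lo2 - R lo lo2 - R hi hi2 + R lo hi2"
proof -
  have "(\<Sum>b\<in>{lo2..<hi2}. R a b - R (a - 1) b - R a (Suc b) + R (a - 1) (Suc b))
      = (R a lo2 - R a hi2) - (R (a - 1) lo2 - R (a - 1) hi2)" for a
  proof -
    have "(\<Sum>b\<in>{lo2..<hi2}. R a b - R (a - 1) b - R a (Suc b) + R (a - 1) (Suc b))
        = (\<Sum>b\<in>{lo2..<hi2}. (\<lambda>b. R a b - R (a - 1) b) b - (\<lambda>b. R a b - R (a - 1) b) (Suc b))"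
      by (rule sum.cong) auto
    also have "\<dots> = (R a lo2 - R (a - 1) lo2) - (R a hi2 - R (a - 1) hi2)"
      by (rule tele_b[OF assms(2)])
    finally show ?thesis by simp
  qed
  hence "(\<Sum>a\<in>{lo<..hi}. \<Sum>b\<in>{lo2..<hi2}. R a b - R (a - 1) b - R a (Suc b) + R (a - 1) (Suc b))
     = (\<Sum>a\<in>{lo<..hi}. (\<lambda>a. R a lo2 - R a hi2) a - (\<lambda>a. R a lo2 - R a hi2) (a - 1))"
    by simp
  also have "\<dots> = (R hi lo2 - R hi hi2) - (R lo lo2 - R lo hi2)"
    by (rule tele_a[OF assms(1)])
  finally show ?thesis by simp
qed

definition Gm :: "('p \<Rightarrow> 'v set set) \<Rightarrow> 'p list \<Rightarrow> nat \<Rightarrow> nat \<Rightarrow> nat \<Rightarrow> int" where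
  "Gm M ps q a b = pm_rank M ps q a b - pm_rank M ps q (a - 1) b
      - pm_rank M ps q a (Suc b) + pm_rank M ps q (a - 1) (Suc b)"

lemma interval_mult_Gm: "interval_mult M ps q a b = nat (Gm M ps q a b)"
  by (simp add: interval_mult_def Gm_def)

lemma pm_rank_eq:
  assumes "length ps' = length ps" "filt M ps i = filt M ps' i" "filt M ps j = filt M ps' j"
  shows "pm_rank M ps q i j = pm_rank M ps' q i j"
  using assms by (simp add: pm_rank_def)

lemma block_sum_eq:
  assumes len: "length ps' = length ps"
    and ag: "\<And>k. k \<in> {lo, hi, lo2, hi2} \<Longrightarrow> filt M ps k = filt M ps' k"
    and le: "lo \<le> hi" "lo2 \<le> hi2"
  shows "(\<Sum>ab\<in>{lo<..hi} \<times> {lo2..<hi2}. Gm M ps q (fst ab) (snd ab))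
       = (\<Sum>ab\<in>{lo<..hi} \<times> {lo2..<hi2}. Gm M ps' q (fst ab) (snd ab))"
proof -
  have e: "(\<Sum>ab\<in>{lo<..hi} \<times> {lo2..<hi2}. Gm M ps q (fst ab) (snd ab))
     = pm_rank M ps q hi lo2 - pm_rank M ps q lo lo2 - pm_rank M ps q hi hi2 + pm_rank M ps q lo hi2"
    for ps
  proof -
    have "(\<Sum>ab\<in>{lo<..hi} \<times> {lo2..<hi2}. Gm M ps q (fst ab) (snd ab))
       = (\<Sum>a\<in>{lo<..hi}. \<Sum>b\<in>{lo2..<hi2}. Gm M ps q a b)"
      by (simp add: sum.cartesian_product split_def)
    also have "\<dots> = pm_rank M ps q hi lo2 - pm_rank M ps q lo lo2 - pm_rank M ps q hi hi2 + pm_rank M ps q lo hi2"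
      unfolding Gm_def by (rule tele2[OF le])
    finally show ?thesis .
  qed
  show ?thesis unfolding e using pm_rank_eq[OF len ag ag] by simp
qed


lemma length_filter_mono':
  "(\<And>x. P x \<Longrightarrow> Q x) \<Longrightarrow> length (filter P xs) \<le> length (filter Q xs)"
  by (induction xs) auto

theorem proposition13:
  fixes K :: "'v set set" and V :: "'v set set set" and P :: "'p::order set"
    and M :: "'p \<Rightarrow> 'v set set" and f :: "'v set \<Rightarrow> real" and ps ps' :: "'p list"
  assumes "finite_simp_complex K"
    and "multivector_field K V"
    and "morse_decomposition K V P M"
    and "lyapunov P M f"
    and "f_compatible P M f ps"
    and "f_compatible P M f ps'"
  shows "\<forall>q. pers M f ps q = pers M f ps' q"
proof -
  define val where "val = lyap_val M f"
  have d1: "distinct ps" "set ps = P" "sorted (map val ps)"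
    using assms(5) by (auto simp: f_compatible_def val_def)
  have d2: "distinct ps'" "set ps' = P" "sorted (map val ps')"
    using assms(6) by (auto simp: f_compatible_def val_def)
  have UK: "(\<Union>p\<in>P. M p) = K" using assms(3) by (simp add: morse_decomposition_def)
  have subK: "\<forall>p\<in>set ps. M p \<subseteq> K" "\<forall>p\<in>set ps'. M p \<subseteq> K"
    using UK d1(2) d2(2) by blast+
  have len: "length ps' = length ps" using d1 d2 distinct_card by metis
  have vs_eq: "map val ps' = map val ps"
  proof -
    have "mset ps' = mset ps" using d1 d2 set_eq_iff_mset_eq_distinct by metis
    hence "mset (map val ps') = mset (map val ps)" by simp
    thus ?thesis using d1(3) d2(3) by (metis properties_for_sort)
  qed
  define m where "m = length ps"
  define vs where "vs = map val ps"
  define FV where "FV = fval_at M f ps"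
  have lenvs: "length vs = m" by (simp add: vs_def m_def)
  have srt: "sorted vs" using d1(3) by (simp add: vs_def)
  have FV_eq: "fval_at M f ps' = FV"
  proof
    fix i
    show "fval_at M f ps' i = FV i"
    proof (cases "i - 1 < m")
      case True
      have "val (ps' ! (i - 1)) = val (ps ! (i - 1))"
        using True vs_eq len nth_map m_def by metis
      then show ?thesis by (simp add: FV_def fval_at_def len val_def)
    next
      case False
      show ?thesis
      proof (cases "i \<le> m")
        case True
        then have "m = 0" using False by arith
        then have "ps = []" "ps' = []" using len by (auto simp: m_def)
        then show ?thesis by (simp add: FV_def)
      next
        case False
        then show ?thesis by (simp add: FV_def fval_at_def len m_def)
      qed
    qed
  qed
  have FV_in: "FV i = ereal (vs ! (i - 1))" if "1 \<le> i" "i \<le> m" for i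
    using that by (simp add: FV_def fval_at_def vs_def m_def val_def)
  have FV_out: "FV i = \<infinity>" if "m < i" for i
    using that by (simp add: FV_def fval_at_def m_def)
  have filt_Q: "filt M ps (length (filter Q vs)) = filt M ps' (length (filter Q vs))"
    if "\<And>v w. Q v \<Longrightarrow> w \<le> v \<Longrightarrow> Q w" for Q
  proof -
    have "set (take (length (filter Q vs)) ps) = {p \<in> P. Q (val p)}"
      using set_take_filter[OF d1(3) that] d1(2) by (simp add: vs_def)
    moreover have "set (take (length (filter Q vs)) ps') = {p \<in> P. Q (val p)}"
      using set_take_filter[OF d2(3) that] d2(2) vs_eq by (simp add: vs_def)
    ultimately show ?thesis by (simp add: filt_def)
  qed
  have filt_big: "filt M ps k = filt M ps' k" if "m \<le> k" for k
    using that d1(2) d2(2) len by (simp add: filt_def m_def)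
  have idx_lt: "vs ! i < t \<longleftrightarrow> i < length (filter (\<lambda>v. v < t) vs)" if "i < m" for i t
    by (rule sorted_filter_idx[OF srt, of "\<lambda>v. v < t"]) (use that lenvs in auto)
  have idx_le: "vs ! i \<le> t \<longleftrightarrow> i < length (filter (\<lambda>v. v \<le> t) vs)" if "i < m" for i t
    by (rule sorted_filter_idx[OF srt, of "\<lambda>v. v \<le> t"]) (use that lenvs in auto)
  have lt_le: "length (filter (\<lambda>v. v < t) vs) \<le> length (filter (\<lambda>v. v \<le> t) vs)" for t
    by (rule length_filter_mono') auto
  have le_m: "length (filter (\<lambda>v. v \<le> t) vs) \<le> m" for t
    using lenvs length_filter_le by metis
  have Gnn: "Gm M ps q a b \<ge> 0" "Gm M ps' q a b \<ge> 0" if "1 \<le> a" "a \<le> b" "b \<le> m" for q a b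
    using G_nonneg[OF assms(1) subK(1) that(1,2), of q] G_nonneg[OF assms(1) subK(2) that(1,2), of q]
      that(3) len by (simp_all add: Gm_def m_def)
  show ?thesis
  proof
    fix q
    define S where "S = {(a, b). 1 \<le> a \<and> a \<le> b \<and> b \<le> m \<and> FV a \<noteq> FV (Suc b)}"
    define w where "w = (\<lambda>ab::nat\<times>nat. (FV (fst ab), FV (Suc (snd ab))))"
    have finS: "finite S"
      by (rule finite_subset[of _ "{..m} \<times> {..m}"]) (auto simp: S_def)
    have pers1: "pers M f ps q = (\<Sum>ab\<in>S. replicate_mset (interval_mult M ps q (fst ab) (snd ab)) (w ab))"
      by (simp add: pers_def S_def w_def FV_def m_def split_def)
    have pers2: "pers M f ps' q = (\<Sum>ab\<in>S. replicate_mset (interval_mult M ps' q (fst ab) (snd ab)) (w ab))"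
      by (simp add: pers_def S_def w_def FV_eq len m_def split_def)
    have cnt: "count (\<Sum>ab\<in>S. replicate_mset (g ab) (w ab)) pt = (\<Sum>ab\<in>{ab\<in>S. w ab = pt}. g ab)"
      for g :: "nat \<times> nat \<Rightarrow> nat" and pt
      by (simp add: count_sum sum.inter_filter[OF finS] eq_commute)
    show "pers M f ps q = pers M f ps' q"
    proof (rule multiset_eqI)
      fix pt
      define Sp where "Sp = {ab\<in>S. w ab = pt}"
      have key: "(\<Sum>ab\<in>Sp. Gm M ps q (fst ab) (snd ab)) = (\<Sum>ab\<in>Sp. Gm M ps' q (fst ab) (snd ab))"
      proof (cases "Sp = {}")
        case True
        then show ?thesis by simp
      next
        case False
        then obtain a0 b0 where ab0: "(a0, b0) \<in> Sp" by auto
        hence h0: "1 \<le> a0" "a0 \<le> b0" "b0 \<le> m" "FV a0 \<noteq> FV (Suc b0)" "pt = (FV a0, FV (Suc b0))"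
          by (auto simp: Sp_def S_def w_def)
        define x where "x = vs ! (a0 - 1)"
        define lo where "lo = length (filter (\<lambda>v. v < x) vs)"
        define hi where "hi = length (filter (\<lambda>v. v \<le> x) vs)"
        have hi_m: "hi \<le> m" using le_m by (simp add: hi_def)
        have A: "(1 \<le> a \<and> a \<le> m \<and> FV a = ereal x) \<longleftrightarrow> (lo < a \<and> a \<le> hi)" for a
        proof
          assume a: "1 \<le> a \<and> a \<le> m \<and> FV a = ereal x"
          then have "ereal (vs ! (a - 1)) = ereal x" using FV_in[of a] by simp
          then have "vs ! (a - 1) = x" by simp
          have am: "a - 1 < m" using a by auto
          then have "\<not> (a - 1 < lo)" "a - 1 < hi"
            using idx_lt[OF am, of x] idx_le[OF am, of x] \<open>vs ! (a - 1) = x\<close> by (simp_all add: lo_def hi_def)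
          then show "lo < a \<and> a \<le> hi" using a by auto
        next
          assume a: "lo < a \<and> a \<le> hi"
          then have a1: "1 \<le> a" "a \<le> m" using hi_m by auto
          have am: "a - 1 < m" using a1 by auto
          have "\<not> (a - 1 < lo)" "a - 1 < hi" using a by auto
          then have "\<not> vs ! (a - 1) < x" "vs ! (a - 1) \<le> x"
            using idx_lt[OF am, of x] idx_le[OF am, of x] by (simp_all add: lo_def hi_def)
          then have "vs ! (a - 1) = x" by simp
          then show "1 \<le> a \<and> a \<le> m \<and> FV a = ereal x" using a1 FV_in by simp
        qed
        have FVa0: "FV a0 = ereal x" using FV_in h0 by (simp add: x_def)
        have lohi: "lo \<le> hi" using A[of a0] FVa0 h0 by auto
        have "\<exists>lo2 hi2. (\<forall>b. (b \<le> m \<and> FV (Suc b) = snd pt) \<longleftrightarrow> (lo2 \<le> b \<and> b < hi2)) \<and>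
            hi \<le> lo2 \<and> lo2 \<le> hi2 \<and> filt M ps lo2 = filt M ps' lo2 \<and> filt M ps hi2 = filt M ps' hi2"
        proof (cases "Suc b0 \<le> m")
          case True
          define y where "y = vs ! b0"
          define lo2 where "lo2 = length (filter (\<lambda>v. v < y) vs)"
          define hi2 where "hi2 = length (filter (\<lambda>v. v \<le> y) vs)"
          have spt: "snd pt = ereal y" using h0 True FV_in by (simp add: y_def)
          have "x \<le> y" unfolding x_def y_def
            by (rule sorted_nth_mono[OF srt]) (use h0 True lenvs in auto)
          moreover have "x \<noteq> y" using h0 spt FVa0 by auto
          ultimately have xy: "x < y" by simp
          have B: "(b \<le> m \<and> FV (Suc b) = snd pt) \<longleftrightarrow> (lo2 \<le> b \<and> b < hi2)" for b
          proof
            assume b: "b \<le> m \<and> FV (Suc b) = snd pt"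
            have "Suc b \<le> m"
            proof (rule ccontr)
              assume "\<not> Suc b \<le> m"
              then have "FV (Suc b) = \<infinity>" using FV_out by simp
              then show False using b spt by simp
            qed
            then have "vs ! b = y" using b spt FV_in[of "Suc b"] by simp
            then show "lo2 \<le> b \<and> b < hi2"
              using idx_lt[of b y] idx_le[of b y] \<open>Suc b \<le> m\<close> by (auto simp: lo2_def hi2_def)
          next
            assume b: "lo2 \<le> b \<and> b < hi2"
            then have bm: "b < m" using le_m[of y] by (simp add: hi2_def)
            then have "\<not> vs ! b < y" "vs ! b \<le> y"
              using idx_lt[of b y] idx_le[of b y] b by (auto simp: lo2_def hi2_def)
            then have "vs ! b = y" by simp
            then show "b \<le> m \<and> FV (Suc b) = snd pt" using bm FV_in[of "Suc b"] spt by simp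
          qed
          have f1: "hi \<le> lo2"
          proof (rule ccontr)
            assume "\<not> hi \<le> lo2"
            then have l: "lo2 < hi" "lo2 < m" using hi_m by auto
            then have "vs ! lo2 \<le> x" "\<not> vs ! lo2 < y"
              using idx_le[of lo2 x] idx_lt[of lo2 y] by (auto simp: hi_def lo2_def)
            then show False using xy by simp
          qed
          have f2: "lo2 \<le> hi2" using lt_le by (simp add: lo2_def hi2_def)
          have f3: "filt M ps lo2 = filt M ps' lo2" unfolding lo2_def by (rule filt_Q) auto
          have f4: "filt M ps hi2 = filt M ps' hi2" unfolding hi2_def by (rule filt_Q) auto
          show ?thesis
            by (intro exI[of _ lo2] exI[of _ hi2] conjI allI B f1 f2 f3 f4)
        next
          case False
          have spt: "snd pt = \<infinity>" using h0 False FV_out by simp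
          have B: "(b \<le> m \<and> FV (Suc b) = snd pt) \<longleftrightarrow> (m \<le> b \<and> b < Suc m)" for b
          proof (cases "Suc b \<le> m")
            case True
            then show ?thesis using FV_in[of "Suc b"] spt by simp
          next
            case False
            then show ?thesis using FV_out[of "Suc b"] spt by auto
          qed
          show ?thesis
          proof -
            have f3: "filt M ps m = filt M ps' m" "filt M ps (Suc m) = filt M ps' (Suc m)"
              using filt_big by auto
            show ?thesis
              by (intro exI[of _ m] exI[of _ "Suc m"] conjI allI B hi_m f3 le_SucI order_refl)
          qed
        qed
        then obtain lo2 hi2 where B: "\<And>b. (b \<le> m \<and> FV (Suc b) = snd pt) \<longleftrightarrow> (lo2 \<le> b \<and> b < hi2)"
          and hl: "hi \<le> lo2" "lo2 \<le> hi2" and ag2: "filt M ps lo2 = filt M ps' lo2" "filt M ps hi2 = filt M ps' hi2"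
          by blast
        have sptx: "snd pt \<noteq> ereal x" using h0 FVa0 by simp
        have fpt: "fst pt = ereal x" using h0 FVa0 by simp
        have Sp_eq: "Sp = {lo<..hi} \<times> {lo2..<hi2}"
        proof (intro set_eqI iffI)
          fix ab assume "ab \<in> Sp"
          then obtain a b where ab: "ab = (a, b)" "1 \<le> a" "a \<le> b" "b \<le> m" "FV a = fst pt" "FV (Suc b) = snd pt"
            by (cases ab) (auto simp: Sp_def S_def w_def)
          have "lo < a \<and> a \<le> hi" using A[of a] ab fpt by auto
          moreover have "lo2 \<le> b \<and> b < hi2" using B[of b] ab by auto
          ultimately show "ab \<in> {lo<..hi} \<times> {lo2..<hi2}" using ab by auto
        next
          fix ab assume "ab \<in> {lo<..hi} \<times> {lo2..<hi2}"
          then obtain a b where ab: "ab = (a, b)" "lo < a" "a \<le> hi" "lo2 \<le> b" "b < hi2" by auto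
          have a: "1 \<le> a" "a \<le> m" "FV a = ereal x" using A[of a] ab by auto
          have b: "b \<le> m" "FV (Suc b) = snd pt" using B[of b] ab by auto
          have "a \<le> b" using ab hl by simp
          have "(a, b) \<in> S" unfolding S_def using a b \<open>a \<le> b\<close> sptx by auto
          moreover have "w (a, b) = pt" unfolding w_def using a(3) b(2) fpt by (simp add: prod_eq_iff)
          ultimately show "ab \<in> Sp" unfolding Sp_def ab(1) by blast
        qed
        have ag: "filt M ps k = filt M ps' k" if "k \<in> {lo, hi, lo2, hi2}" for k
        proof -
          have "filt M ps lo = filt M ps' lo" unfolding lo_def by (rule filt_Q) auto
          moreover have "filt M ps hi = filt M ps' hi" unfolding hi_def by (rule filt_Q) auto
          ultimately show ?thesis using that ag2 by auto
        qed
        show ?thesis unfolding Sp_eq by (rule block_sum_eq[OF len ag lohi hl(2)]) auto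
      qed
      have i1: "int (\<Sum>ab\<in>Sp. interval_mult M ps q (fst ab) (snd ab)) = (\<Sum>ab\<in>Sp. Gm M ps q (fst ab) (snd ab))"
        unfolding of_nat_sum interval_mult_Gm
        by (rule sum.cong) (auto simp: Sp_def S_def intro!: Gnn)
      have i2: "int (\<Sum>ab\<in>Sp. interval_mult M ps' q (fst ab) (snd ab)) = (\<Sum>ab\<in>Sp. Gm M ps' q (fst ab) (snd ab))"
        unfolding of_nat_sum interval_mult_Gm
        by (rule sum.cong) (auto simp: Sp_def S_def intro!: Gnn)
      have "(\<Sum>ab\<in>Sp. interval_mult M ps q (fst ab) (snd ab)) = (\<Sum>ab\<in>Sp. interval_mult M ps' q (fst ab) (snd ab))"
        using i1 i2 key by linarith
      then show "count (pers M f ps q) pt = count (pers M f ps' q) pt"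
        unfolding pers1 pers2 cnt Sp_def by simp
    qed
  qed
qed

end
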